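(* Let $s,t,m$ be positive integers with $s\le t$, $s\mid m$, $m\ge t+2$, let $n=m^2$, and let $z=s(\lceil (t+2)/s\rceil-1)$. Let $v(0),\dots,v(m-1)$ be integers with $0\le v(j)\le t-1-(j\bmod s)$ for all $j$ and $v(j)=0$ for $m-z\le j\le m-1$. Starting from any configuration of distinct cell values $c_0,\dots,c_{n-1}$, after the Block Algorithm (described in the context) finishes, for every $j$ with $0\le j\le m-z-1$, \[ \bigl|\{k:\ j<k\le s\lfloor j/s\rfloor+t-1,\ c_k<c_j\}\bigr| = v(j), \] i.e., the block of cells $c_0,\dots,c_{m-1}$ represents the target digits $v(0),\dots,v(m-z-1)$ in the $(s,t,n)$-local rank-modulation factoradic representation.
   Context: Cells $c_0,\dots,c_{n-1}$ are real numbers (indices modulo $n$). For $0\le j\le n-1$ let $l(j)=s\lceil (j-t+1)/s\rceil \bmod n$ and $r(j)=(s\lfloor j/s\rfloor+t-1)\bmod n$. Pushing cell $j$ ("push-to-the-top") replaces $c_j$ by $\max\{c_{l(j)},c_{l(j)+1},\dots,c_{r(j)}\}+1$ (indices cyclic), leaving other cells unchanged. For $0\le j\le m-3$ define $l'(j)=l(j)$ if $0\le l(j)\le m-3$ and $l'(j)=0$ otherwise, and $r'(j)=r(j)$ if $0\le r(j)\le m-3$ and $r'(j)=m-3$ otherwise. Block Algorithm: (1) push cell $n-1$; (2) set $a_k\leftarrow 0$ for $k=0,\dots,m-3$ and $j\leftarrow 0$; (3) repeat: if $v(j)=\sum_{i=j+1}^{r'(j)}a_i$ and $a_j=0$, then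 push cell $j$, set $a_j\leftarrow 1$ and $j\leftarrow l'(j)$; otherwise set $j\leftarrow j+1$; until $j=m-2$; (4) push cell $m-2$. *)

theory Defs
  imports Complex_Main
begin

text \<open>Parameters: n = number of cells, s, t of the (s,t,n)-local scheme, m = block length.
  Cells are c 0, ..., c (n-1) (a function nat => real; values outside {..<n} are irrelevant).\<close>

definition lidx :: "nat \<Rightarrow> nat \<Rightarrow> nat \<Rightarrow> nat \<Rightarrow> nat" where
  "lidx n s t j = nat ((int s * \<lceil>real_of_int (int j - int t + 1) / real s\<rceil>) mod int n)"

definition ridx :: "nat \<Rightarrow> nat \<Rightarrow> nat \<Rightarrow> nat \<Rightarrow> nat" where
  "ridx n s t j = nat ((int s * \<lfloor>real j / real s\<rfloor> + int t - 1) mod int n)"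

definition window :: "nat \<Rightarrow> nat \<Rightarrow> nat \<Rightarrow> nat \<Rightarrow> nat set" where
  "window n s t j = {(lidx n s t j + i) mod n | i. i \<le> (ridx n s t j + n - lidx n s t j) mod n}"

definition push :: "nat \<Rightarrow> nat \<Rightarrow> nat \<Rightarrow> (nat \<Rightarrow> real) \<Rightarrow> nat \<Rightarrow> (nat \<Rightarrow> real)" where
  "push n s t c j = c(j := Max (c ` window n s t j) + 1)"

definition lprime :: "nat \<Rightarrow> nat \<Rightarrow> nat \<Rightarrow> nat \<Rightarrow> nat \<Rightarrow> nat" where
  "lprime m n s t j = (if lidx n s t j \<le> m - 3 then lidx n s t j else 0)"

definition rprime :: "nat \<Rightarrow> nat \<Rightarrow> nat \<Rightarrow> nat \<Rightarrow> nat \<Rightarrow> nat" where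
  "rprime m n s t j = (if ridx n s t j \<le> m - 3 then ridx n s t j else m - 3)"

text \<open>State of the Block Algorithm: (cells, flags a, loop index j).\<close>
type_synonym bstate = "(nat \<Rightarrow> real) \<times> (nat \<Rightarrow> int) \<times> nat"

text \<open>Initialisation: steps (1) and (2).\<close>
definition block_init :: "nat \<Rightarrow> nat \<Rightarrow> nat \<Rightarrow> (nat \<Rightarrow> real) \<Rightarrow> bstate" where
  "block_init n s t c = (push n s t c (n - 1), (\<lambda>_. 0), 0)"

text \<open>One iteration of the body of the repeat loop in step (3).\<close>
definition block_step :: "nat \<Rightarrow> nat \<Rightarrow> nat \<Rightarrow> nat \<Rightarrow> (nat \<Rightarrow> int) \<Rightarrow> bstate \<Rightarrow> bstate" where
  "block_step m n s t v st = (case st of (c, a, j) \<Rightarrow>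
     (if v j = (\<Sum>i\<in>{j+1..rprime m n s t j}. a i) \<and> a j = 0
      then (push n s t c j, a(j := 1), lprime m n s t j)
      else (c, a, j + 1)))"

definition block_iter :: "nat \<Rightarrow> nat \<Rightarrow> nat \<Rightarrow> nat \<Rightarrow> (nat \<Rightarrow> int) \<Rightarrow> (nat \<Rightarrow> real) \<Rightarrow> nat \<Rightarrow> bstate" where
  "block_iter m n s t v c k = (block_step m n s t v ^^ k) (block_init n s t c)"

end

theory Submission
  imports Defs
begin

lemma win_mem:
  fixes l r :: int and x N :: nat
  assumes "0 < N" "l \<le> int x" "int x \<le> r" "r - l < int N" "x < N"
  shows "x \<in> {(nat (l mod int N) + i) mod N | i. i \<le> (nat (r mod int N) + N - nat (l mod int N)) mod N}"
proof -
  define i where "i = nat (int x - l)"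
  have lm: "0 \<le> l mod int N" "l mod int N < int N" using assms by auto
  have rm: "0 \<le> r mod int N" "r mod int N < int N" using assms by auto
  have "int ((nat (l mod int N) + i) mod N) = (l mod int N + (int x - l)) mod int N"
    using lm assms unfolding i_def by (simp add: zmod_int)
  also have "\<dots> = int x mod int N" by (simp add: mod_simps)
  also have "\<dots> = int x" using assms by simp
  finally have e1: "(nat (l mod int N) + i) mod N = x" by simp
  have "int ((nat (r mod int N) + N - nat (l mod int N)) mod N) = (r mod int N + int N - l mod int N) mod int N"
  proof -
    have "int (nat (r mod int N) + N - nat (l mod int N)) = r mod int N + int N - l mod int N"
      using lm rm by linarith
    then show ?thesis by (simp add: zmod_int)
  qed
  also have "\<dots> = (r - l) mod int N"
  proof -
    have eq: "r mod int N + int N - l mod int N = (r mod int N - l mod int N) + int N" by simp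
    have "(r mod int N + int N - l mod int N) mod int N = (r mod int N - l mod int N) mod int N"
      unfolding eq by (rule mod_add_self2)
    also have "\<dots> = (r - l) mod int N" by (rule mod_diff_eq)
    finally show ?thesis .
  qed
  also have "\<dots> = r - l" using assms by simp
  finally have e2: "i \<le> (nat (r mod int N) + N - nat (l mod int N)) mod N"
    unfolding i_def using assms by linarith
  show ?thesis using e1 e2 by blast
qed

lemma sum01:
  fixes a :: "nat \<Rightarrow> int"
  assumes "finite A" "\<forall>i. a i = 0 \<or> a i = 1"
  shows "(\<Sum>k\<in>A. a k) = int (card {k\<in>A. a k = 1})"
proof -
  have "(\<Sum>k\<in>A. a k) = (\<Sum>k\<in>A. if a k = 1 then 1 else 0)"
    by (rule sum.cong) (use assms in auto)
  also have "\<dots> = int (card {k\<in>A. a k = 1})"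
    using assms(1) by (simp add: sum.If_cases Collect_conj_eq Int_commute Collect_mem_eq)
  finally show ?thesis .
qed

locale blk =
  fixes s t m n :: nat and v :: "nat \<Rightarrow> int"
  assumes s0: "0 < s" and t0: "0 < t" and st: "s \<le> t" and sm: "s dvd m" and tm: "t + 2 \<le> m"
    and nm: "n = m ^ 2"
    and vb: "\<forall>j<m. 0 \<le> v j \<and> v j \<le> int t - 1 - int (j mod s)"
    and vz: "\<forall>j. int m - int s * (\<lceil>real (t + 2) / real s\<rceil> - 1) \<le> int j \<and> j \<le> m - 1 \<longrightarrow> v j = 0"
begin

definition R :: "nat \<Rightarrow> nat" where "R i = s * (i div s) + t - 1"
definition lint :: "nat \<Rightarrow> int" where "lint k = int s * \<lceil>real_of_int (int k - int t + 1) / real s\<rceil>"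
definition rp :: "nat \<Rightarrow> nat" where "rp i = rprime m n s t i"

lemma n_big: "2 * m < n" "3 \<le> m"
proof -
  show "3 \<le> m" using tm t0 by linarith
  then have "3 * m \<le> m * m" by simp
  then show "2 * m < n" using nm \<open>3 \<le> m\<close> by (simp add: power2_eq_square)
qed

lemma R_ge: "i \<le> R i"
proof -
  have "i = s * (i div s) + i mod s" by simp
  moreover have "i mod s < s" using s0 by simp
  ultimately show ?thesis unfolding R_def using st by linarith
qed

lemma R_le: "R i \<le> i + t - 1"
  unfolding R_def using t0 by (simp add: add.commute le_diff_conv2 minus_mod_eq_mult_div [symmetric])

lemma ridx_eq: assumes "i \<le> m - 3" shows "ridx n s t i = R i"
proof -
  have fl: "\<lfloor>real i / real s\<rfloor> = int (i div s)" by (simp add: floor_divide_of_nat_eq)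
  have "R i < n" using R_le[of i] assms n_big tm by linarith
  moreover have "int s * int (i div s) + int t - 1 = int (R i)" unfolding R_def using t0 by simp
  ultimately show ?thesis unfolding ridx_def fl by simp
qed

lemma lint_props: "int k - int t + 1 \<le> lint k" "lint k \<le> int k"
proof -
  define x where "x = real_of_int (int k - int t + 1) / real s"
  have c1: "x \<le> of_int \<lceil>x\<rceil>" "of_int \<lceil>x\<rceil> < x + 1" by linarith+
  have sp: "real s > 0" using s0 by simp
  have "real s * x = real_of_int (int k - int t + 1)" unfolding x_def using sp by simp
  have "real_of_int (int k - int t + 1) \<le> real s * of_int \<lceil>x\<rceil>"
    using mult_left_mono[OF c1(1), of "real s"] sp \<open>real s * x = _\<close> by simp
  then have "real_of_int (int k - int t + 1) \<le> real_of_int (int s * \<lceil>x\<rceil>)" by simp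
  then show "int k - int t + 1 \<le> lint k" unfolding lint_def x_def[symmetric] of_int_le_iff .
  have "real s * of_int \<lceil>x\<rceil> < real s * (x + 1)"
    using mult_strict_left_mono[OF c1(2) sp] .
  then have "real_of_int (lint k) < real_of_int (int k - int t + 1) + real s"
    unfolding lint_def x_def[symmetric] using \<open>real s * x = _\<close> by (simp add: algebra_simps)
  then have "lint k < int k - int t + 1 + int s" by linarith
  then show "lint k \<le> int k" using st by linarith
qed

lemma lint_le: assumes "k \<le> R i" shows "lint k \<le> int i"
proof -
  have fl: "\<lceil>real_of_int (int k - int t + 1) / real s\<rceil> \<le> int (i div s)"
  proof -
    have h: "k + 1 \<le> s * (i div s) + t" using assms t0 unfolding R_def by linarith
    have "int (k + 1) \<le> int (s * (i div s) + t)" using h by (simp only: of_nat_le_iff)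
    then have "int k - int t + 1 \<le> int s * int (i div s)" by simp
    then have "real_of_int (int k - int t + 1) \<le> real s * real (i div s)"
      by (metis of_int_le_iff of_int_of_nat_eq of_int_mult)
    then have "real_of_int (int k - int t + 1) / real s \<le> real (i div s)"
      using s0 by (simp add: divide_le_eq mult.commute)
    then show ?thesis by (simp add: ceiling_le_iff)
  qed
  have "lint k \<le> int s * int (i div s)" unfolding lint_def using fl s0 by simp
  also have "\<dots> \<le> int i"
  proof -
    have "s * (i div s) \<le> i" by (simp add: times_div_less_eq_dividend)
    then show ?thesis by (metis of_nat_le_iff of_nat_mult)
  qed
  finally show ?thesis .
qed


lemma lidx_eq: "lidx n s t k = nat (lint k mod int n)"
  unfolding lidx_def lint_def by simp

lemma lidx_cases: assumes "k \<le> m - 3"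
  shows "(0 \<le> lint k \<and> lidx n s t k = nat (lint k)) \<or> (lint k < 0 \<and> m - 3 < lidx n s t k)"
proof (cases "0 \<le> lint k")
  case True
  have "lint k < int n" using lint_props(2)[of k] assms n_big by linarith
  then show ?thesis using True by (simp add: lidx_eq)
next
  case False
  have lo: "int k - int t + 1 \<le> lint k" by (rule lint_props)
  have "lint k mod int n = lint k + int n"
  proof -
    have "lint k + int n \<ge> 0" "lint k + int n < int n" using lo False n_big tm by linarith+
    then have "(lint k + int n) mod int n = lint k + int n" by (simp only: mod_pos_pos_trivial)
    then show ?thesis by (simp only: mod_add_self2)
  qed
  then have "lidx n s t k = nat (lint k + int n)" by (simp add: lidx_eq)
  moreover have "lint k + int n > int (m - 3)" using lo n_big tm by linarith
  ultimately show ?thesis using False by (simp add: zless_nat_eq_int_zless)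
qed

lemma lprime_le: assumes "k \<le> m - 3" shows "lprime m n s t k \<le> k"
  using lidx_cases[OF assms] lint_props(2)[of k] unfolding lprime_def by auto

lemma lprime_lt: assumes "k \<le> m - 3" "i < lprime m n s t k" shows "R i < k"
proof -
  have "lprime m n s t k \<noteq> 0" using assms by simp
  then have l1: "lidx n s t k \<le> m - 3" "lprime m n s t k = lidx n s t k" unfolding lprime_def by (auto split: if_splits)
  then have "0 \<le> lint k" "lidx n s t k = nat (lint k)" using lidx_cases[OF assms(1)] by auto
  with l1 have "lprime m n s t k = nat (lint k)" by simp
  then have "int i < lint k" using assms by linarith
  then show ?thesis using lint_le[of k i] by linarith
qed

lemma rp_props: assumes "i \<le> m - 3" shows "rp i \<le> R i" "rp i \<le> m - 3" "i \<le> rp i"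
  using ridx_eq[OF assms] R_ge[of i] assms unfolding rp_def rprime_def by auto

lemma win_in: assumes "k \<le> m - 3" "lint k \<le> int x" "x \<le> R k"
  shows "x \<in> window n s t k"
proof -
  have Rn: "R k < n" using R_le[of k] assms n_big tm by linarith
  have a: "ridx n s t k = nat (int (R k) mod int n)" using ridx_eq[OF assms(1)] Rn by simp
  have "int (R k) - lint k < int n" using R_le[of k] lint_props(1)[of k] n_big tm t0 assms by linarith
  then have "x \<in> {(nat (lint k mod int n) + i) mod n | i. i \<le> (nat (int (R k) mod int n) + n - nat (lint k mod int n)) mod n}"
    using win_mem[of n "lint k" x "int (R k)"] assms Rn n_big by simp
  then show ?thesis unfolding window_def lidx_eq a .
qed

lemma win_fin: "finite (window n s t k)"
  unfolding window_def by (rule finite_image_set) simp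

lemma push_top: assumes "y \<in> window n s t k" shows "c y < push n s t c k k"
proof -
  have "c y \<le> Max (c ` window n s t k)" using assms win_fin by (simp add: Max_ge)
  then show ?thesis unfolding push_def by simp
qed

lemma push_other: "y \<noteq> k \<Longrightarrow> push n s t c k y = c y"
  unfolding push_def by simp


definition S :: "(nat \<Rightarrow> int) \<Rightarrow> nat \<Rightarrow> int" where "S a i = (\<Sum>k\<in>{i+1..rp i}. a k)"

definition Inv :: "bstate \<Rightarrow> bool" where
"Inv st = (case st of (c, a, p) \<Rightarrow> p \<le> m - 2 \<and> (\<forall>i. a i = 0 \<or> a i = 1) \<and> (\<forall>i. a i \<noteq> 0 \<longrightarrow> i \<le> m - 3)
  \<and> (\<forall>i<p. a i = 0 \<longrightarrow> S a i < v i) \<and> (\<forall>i\<le>m-3. a i = 0 \<longrightarrow> S a i \<le> v i)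
  \<and> (\<forall>i. a i = 1 \<longrightarrow> int (card {k\<in>{i+1..rp i}. a k = 1 \<and> c k < c i}) = v i))"

definition mu :: "bstate \<Rightarrow> nat" where
"mu st = (case st of (c, a, p) \<Rightarrow> m * card {i. i \<le> m - 3 \<and> a i = 0} + (m - 2 - p))"

lemma S_upd: assumes "a p = 0"
  shows "S (a(p := 1)) i = S a i + (if p \<in> {i+1..rp i} then 1 else 0)"
proof (cases "p \<in> {i+1..rp i}")
  case True
  have h0: "S (a(p := 1)) i = (a(p:=1)) p + (\<Sum>k\<in>{i+1..rp i} - {p}. (a(p:=1)) k)"
    unfolding S_def using True by (simp only: sum.remove finite_atLeastAtMost)
  have h1: "(\<Sum>k\<in>{i+1..rp i} - {p}. (a(p:=1)) k) = (\<Sum>k\<in>{i+1..rp i} - {p}. a k)"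
    by (rule sum.cong) auto
  have h2: "S a i = a p + (\<Sum>k\<in>{i+1..rp i} - {p}. a k)"
    unfolding S_def using True by (simp only: sum.remove finite_atLeastAtMost)
  have "S (a(p := 1)) i = S a i + 1" using h0 h1 h2 assms by simp
  then show ?thesis using True by simp
next
  case False
  have "S (a(p := 1)) i = S a i" unfolding S_def using False by (intro sum.cong) auto
  then show ?thesis using False by simp
qed

lemma step_push:
  assumes I: "Inv (c, a, p)" and pn: "p \<noteq> m - 2" and cond: "v p = S a p" "a p = 0"
  shows "Inv (push n s t c p, a(p := 1), lprime m n s t p) \<and>
         mu (push n s t c p, a(p := 1), lprime m n s t p) < mu (c, a, p)"
proof -
  define c' where "c' = push n s t c p"
  define a' where "a' = a(p := 1)"
  define p' where "p' = lprime m n s t p"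
  from I have p2: "p \<le> m - 2" and a01: "\<forall>i. a i = 0 \<or> a i = 1" and asup: "\<forall>i. a i \<noteq> 0 \<longrightarrow> i \<le> m - 3"
    and I4: "\<forall>i<p. a i = 0 \<longrightarrow> S a i < v i" and I5: "\<forall>i\<le>m-3. a i = 0 \<longrightarrow> S a i \<le> v i"
    and I6: "\<forall>i. a i = 1 \<longrightarrow> int (card {k\<in>{i+1..rp i}. a k = 1 \<and> c k < c i}) = v i"
    unfolding Inv_def by auto
  have p3: "p \<le> m - 3" using p2 pn by linarith
  have pp: "p' \<le> p" unfolding p'_def by (rule lprime_le[OF p3])
  have c1: "p' \<le> m - 2" using pp p2 by linarith
  have c2: "\<forall>i. a' i = 0 \<or> a' i = 1" using a01 unfolding a'_def by auto
  have c3: "\<forall>i. a' i \<noteq> 0 \<longrightarrow> i \<le> m - 3" using asup p3 unfolding a'_def by auto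
  have c4: "\<forall>i<p'. a' i = 0 \<longrightarrow> S a' i < v i"
  proof (intro allI impI)
    fix i assume ip: "i < p'" and ai: "a' i = 0"
    have "R i < p" using lprime_lt[OF p3] ip unfolding p'_def by blast
    moreover have "i \<le> m - 3" using ip pp p3 by linarith
    ultimately have "p \<notin> {i+1..rp i}" using rp_props(1)[of i] by auto
    then have "S a' i = S a i" unfolding a'_def using S_upd[where a=a and p=p, OF cond(2)] by simp
    moreover have "a i = 0" using ai ip pp unfolding a'_def by (auto split: if_splits)
    ultimately show "S a' i < v i" using I4 ip pp by auto
  qed
  have c5: "\<forall>i\<le>m-3. a' i = 0 \<longrightarrow> S a' i \<le> v i"
  proof (intro allI impI)
    fix i assume i3: "i \<le> m - 3" and ai: "a' i = 0"
    then have ip: "i \<noteq> p" "a i = 0" unfolding a'_def by (auto split: if_splits)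
    show "S a' i \<le> v i"
    proof (cases "p \<in> {i+1..rp i}")
      case True
      then have "S a i < v i" using I4 ip by auto
      then show ?thesis unfolding a'_def using S_upd[where a=a and p=p, OF cond(2)] True by simp
    next
      case False
      then show ?thesis unfolding a'_def using S_upd[where a=a and p=p and i=i, OF cond(2)] I5 i3 ip by auto
    qed
  qed
  have c6: "\<forall>i. a' i = 1 \<longrightarrow> int (card {k\<in>{i+1..rp i}. a' k = 1 \<and> c' k < c' i}) = v i"
  proof (intro allI impI)
    fix i assume ai: "a' i = 1"
    show "int (card {k\<in>{i+1..rp i}. a' k = 1 \<and> c' k < c' i}) = v i"
    proof (cases "i = p")
      case True
      have "{k\<in>{i+1..rp i}. a' k = 1 \<and> c' k < c' i} = {k\<in>{p+1..rp p}. a k = 1}"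
      proof (intro set_eqI iffI)
        fix k assume "k \<in> {k\<in>{i+1..rp i}. a' k = 1 \<and> c' k < c' i}"
        then show "k \<in> {k\<in>{p+1..rp p}. a k = 1}" using True unfolding a'_def by auto
      next
        fix k assume k: "k \<in> {k\<in>{p+1..rp p}. a k = 1}"
        have "lint p \<le> int k" using lint_props(2)[of p] k by auto
        moreover have "k \<le> R p" using k rp_props(1)[OF p3] by auto
        ultimately have "k \<in> window n s t p" using win_in[OF p3] by blast
        then have "c k < c' p" unfolding c'_def by (rule push_top)
        moreover have "c' k = c k" using k unfolding c'_def by (auto simp: push_other)
        ultimately show "k \<in> {k\<in>{i+1..rp i}. a' k = 1 \<and> c' k < c' i}" using k True unfolding a'_def by auto
      qed
      then have "int (card {k\<in>{i+1..rp i}. a' k = 1 \<and> c' k < c' i}) = S a p"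
        unfolding S_def using sum01[OF _ a01, of "{p+1..rp p}"] by simp
      then show ?thesis using cond True by simp
    next
      case False
      have ai1: "a i = 1" using ai False unfolding a'_def by simp
      have i3: "i \<le> m - 3" using asup ai1 by auto
      have "{k\<in>{i+1..rp i}. a' k = 1 \<and> c' k < c' i} = {k\<in>{i+1..rp i}. a k = 1 \<and> c k < c i}"
      proof (intro set_eqI)
        fix k
        show "k \<in> {k\<in>{i+1..rp i}. a' k = 1 \<and> c' k < c' i} \<longleftrightarrow> k \<in> {k\<in>{i+1..rp i}. a k = 1 \<and> c k < c i}"
        proof (cases "k = p \<and> k \<in> {i+1..rp i}")
          case True
          have "p \<le> R i" using True rp_props(1)[OF i3] by auto
          then have "lint p \<le> int i" by (rule lint_le)
          moreover have "i \<le> R p" using True R_ge[of p] by auto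
          ultimately have "i \<in> window n s t p" using win_in[OF p3] by blast
          then have "c i < c' p" unfolding c'_def by (rule push_top)
          moreover have "c' i = c i" using False unfolding c'_def by (simp add: push_other)
          ultimately show ?thesis using True cond by auto
        next
          case False
          then show ?thesis using \<open>i \<noteq> p\<close> unfolding a'_def c'_def by (auto simp: push_other)
        qed
      qed
      then show ?thesis using I6 ai1 by simp
    qed
  qed
  have inv: "Inv (c', a', p')" unfolding Inv_def using c1 c2 c3 c4 c5 c6 by simp
  define U where "U = {i. i \<le> m - 3 \<and> a i = 0}"
  have U': "{i. i \<le> m - 3 \<and> a' i = 0} = U - {p}" unfolding U_def a'_def by auto
  have fU: "finite U" unfolding U_def by simp
  have pU: "p \<in> U" unfolding U_def using p3 cond by simp
  have "card (U - {p}) = card U - 1" using fU pU by simp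
  moreover have "card U \<ge> 1" using fU pU by (metis card_0_eq empty_iff less_one not_le)
  ultimately have cu: "card {i. i \<le> m - 3 \<and> a' i = 0} + 1 = card U" unfolding U' by linarith
  have "m - 2 - p' < m" using n_big by linarith
  then have "m * card {i. i \<le> m - 3 \<and> a' i = 0} + (m - 2 - p') < m * card {i. i \<le> m - 3 \<and> a' i = 0} + m"
    by linarith
  also have "\<dots> = m * card U" using cu by (metis add_mult_distrib2 nat_mult_1_right)
  also have "\<dots> \<le> mu (c, a, p)" unfolding mu_def U_def by simp
  finally have "mu (c', a', p') < mu (c, a, p)" unfolding mu_def by simp
  then show ?thesis using inv unfolding c'_def a'_def p'_def by simp
qed


lemma step_inv:
  assumes I: "Inv st" and pn: "snd (snd st) \<noteq> m - 2"
  shows "Inv (block_step m n s t v st) \<and> mu (block_step m n s t v st) < mu st"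
proof -
  obtain c a p where st: "st = (c, a, p)" by (cases st) auto
  have pn': "p \<noteq> m - 2" using pn st by simp
  have I': "Inv (c, a, p)" using I st by simp
  show ?thesis
  proof (cases "v p = S a p \<and> a p = 0")
    case True
    have "block_step m n s t v st = (push n s t c p, a(p := 1), lprime m n s t p)"
      using True unfolding st block_step_def S_def rp_def by simp
    then show ?thesis using step_push[OF I' pn'] True st by simp
  next
    case False
    have bs: "block_step m n s t v st = (c, a, p + 1)"
      using False unfolding st block_step_def S_def rp_def by auto
    from I' have p2: "p \<le> m - 2" and I5: "\<forall>i\<le>m-3. a i = 0 \<longrightarrow> S a i \<le> v i"
      and I4: "\<forall>i<p. a i = 0 \<longrightarrow> S a i < v i"
      unfolding Inv_def by auto
    have p3: "p \<le> m - 3" using p2 pn' by linarith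
    have "\<forall>i<p+1. a i = 0 \<longrightarrow> S a i < v i"
    proof (intro allI impI)
      fix i assume "i < p + 1" "a i = 0"
      then show "S a i < v i"
      proof (cases "i < p")
        case True then show ?thesis using I4 \<open>a i = 0\<close> by auto
      next
        case False
        then have "i = p" using \<open>i < p + 1\<close> by simp
        then show ?thesis using I5 p3 False \<open>a i = 0\<close> \<open>\<not> (v p = S a p \<and> a p = 0)\<close>
          by force
      qed
    qed
    then have "Inv (c, a, p + 1)" using I' p3 n_big unfolding Inv_def by auto
    moreover have "mu (c, a, p + 1) < mu (c, a, p)" unfolding mu_def using p3 n_big by simp
    ultimately show ?thesis using bs st by simp
  qed
qed

lemma init_inv: "Inv (block_init n s t c)"
  unfolding block_init_def Inv_def S_def using vb n_big by auto

lemma vbound: assumes "i \<le> m - 3" shows "v i \<le> int (rp i) - int i"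
proof (cases "R i \<le> m - 3")
  case True
  then have "rp i = R i" using ridx_eq[OF assms] unfolding rp_def rprime_def by simp
  moreover have "R i - i = t - 1 - i mod s"
  proof -
    have "i = s * (i div s) + i mod s" by simp
    moreover have "i mod s < s" using s0 by simp
    ultimately show ?thesis unfolding R_def using st by linarith
  qed
  moreover have "v i \<le> int t - 1 - int (i mod s)" using vb assms n_big by auto
  moreover have "i mod s < s" using s0 by simp
  ultimately show ?thesis using R_ge[of i] st by linarith
next
  case False
  define q where "q = \<lceil>real (t + 2) / real s\<rceil>"
  have sq: "int t + 2 \<le> int s * q"
  proof -
    have "real (t+2) / real s \<le> of_int q" unfolding q_def by linarith
    then have "real (t+2) \<le> real s * of_int q" using s0 by (simp add: divide_le_eq mult.commute)
    then have "real_of_int (int t + 2) \<le> real_of_int (int s * q)" by simp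
    then show ?thesis by (simp only: of_int_le_iff)
  qed
  obtain M where M: "m = s * M" using sm by (auto elim: dvdE)
  have h: "m - 2 \<le> s * (i div s) + t - 1" using False unfolding R_def by linarith
  have h': "m \<le> s * (i div s) + t + 1" using h t0 n_big by linarith
  have "int m \<le> int (s * (i div s) + t + 1)" using h' by (simp only: of_nat_le_iff)
  then have "int m \<le> int s * int (i div s) + int t + 1" by simp
  then have "int m - int s * q < int s * int (i div s)" using sq by linarith
  then have "int s * (int M - q) < int s * int (i div s)" using M by (simp add: algebra_simps)
  then have "int M - q < int (i div s)" using s0 by (simp add: mult_less_cancel_left)
  then have "int s * (int M - q + 1) \<le> int s * int (i div s)" using s0 by (intro mult_left_mono) auto
  moreover have "int s * int (i div s) \<le> int i"
  proof -
    have "s * (i div s) \<le> i" by (simp add: times_div_less_eq_dividend)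
    then show ?thesis by (metis of_nat_le_iff of_nat_mult)
  qed
  ultimately have "int m - int s * (q - 1) \<le> int i" using M by (simp add: algebra_simps)
  then have "v i = 0" using vz assms unfolding q_def by auto
  then show ?thesis using rp_props(3)[OF assms] by simp
qed


lemma all_pushed: assumes I: "Inv (c, a, m - 2)" shows "\<forall>i\<le>m-3. a i = 1"
proof (rule ccontr)
  assume "\<not> (\<forall>i\<le>m-3. a i = 1)"
  from I have a01: "\<forall>i. a i = 0 \<or> a i = 1" and I4: "\<forall>i<m-2. a i = 0 \<longrightarrow> S a i < v i"
    unfolding Inv_def by auto
  define U where "U = {i. i \<le> m - 3 \<and> a i = 0}"
  have fU: "finite U" unfolding U_def by simp
  have ne: "U \<noteq> {}" using \<open>\<not> _\<close> a01 unfolding U_def by blast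
  define i0 where "i0 = Max U"
  have i0U: "i0 \<in> U" unfolding i0_def using fU ne by simp
  have i03: "i0 \<le> m - 3" "a i0 = 0" using i0U unfolding U_def by auto
  have above: "a k = 1" if "k \<in> {i0+1..rp i0}" for k
  proof -
    have "k \<le> m - 3" using that rp_props(2)[OF i03(1)] by auto
    moreover have "k \<notin> U" using that Max_ge[OF fU, of k] unfolding i0_def by auto
    ultimately show ?thesis using a01 unfolding U_def by auto
  qed
  have "S a i0 = (\<Sum>k\<in>{i0+1..rp i0}. 1)" unfolding S_def by (rule sum.cong) (auto simp: above)
  also have "\<dots> = int (rp i0) - int i0" using rp_props(3)[OF i03(1)] by simp
  finally have "S a i0 = int (rp i0) - int i0" .
  moreover have "S a i0 < v i0" using I4 i03 n_big by auto
  ultimately show False using vbound[OF i03(1)] by simp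
qed

lemma jbound: assumes "int j \<le> int m - int s * (\<lceil>real (t + 2) / real s\<rceil> - 1) - 1"
  shows "R j \<le> m - 3"
proof -
  define q where "q = \<lceil>real (t + 2) / real s\<rceil>"
  have sq: "int t + 2 \<le> int s * q"
  proof -
    have "real (t+2) / real s \<le> of_int q" unfolding q_def by linarith
    then have "real (t+2) \<le> real s * of_int q" using s0 by (simp add: divide_le_eq mult.commute)
    then have "real_of_int (int t + 2) \<le> real_of_int (int s * q)" by simp
    then show ?thesis by (simp only: of_int_le_iff)
  qed
  obtain M where M: "m = s * M" using sm by (auto elim: dvdE)
  have "int s * int (j div s) \<le> int j"
  proof -
    have "s * (j div s) \<le> j" by (simp add: times_div_less_eq_dividend)
    then show ?thesis by (metis of_nat_le_iff of_nat_mult)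
  qed
  also have "int j < int s * (int M - q + 1)" using assms M unfolding q_def[symmetric]
    by (simp add: algebra_simps)
  finally have "int (j div s) < int M - q + 1" using s0 by (simp add: mult_less_cancel_left)
  then have "int s * int (j div s) \<le> int s * (int M - q)" using s0 by (intro mult_left_mono) auto
  then have "int s * int (j div s) + int t - 1 \<le> int m - 3" using M sq by (simp add: algebra_simps)
  moreover have "int (R j) = int s * int (j div s) + int t - 1" unfolding R_def using t0 by simp
  ultimately show ?thesis using n_big by linarith
qed

end

theorem theorem9:
  fixes s t m n :: nat and v :: "nat \<Rightarrow> int" and c :: "nat \<Rightarrow> real"
  assumes "0 < s" "0 < t" "0 < m" "s \<le> t" "s dvd m" "t + 2 \<le> m" "n = m ^ 2"
    and "\<forall>j<m. 0 \<le> v j \<and> v j \<le> int t - 1 - int (j mod s)"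
    and "\<forall>j. int m - int s * (\<lceil>real (t + 2) / real s\<rceil> - 1) \<le> int j \<and> j \<le> m - 1 \<longrightarrow> v j = 0"
    and "inj_on c {..<n}"
  shows "(\<exists>k. snd (snd (block_iter m n s t v c k)) = m - 2) \<and>
    (\<forall>k. snd (snd (block_iter m n s t v c k)) = m - 2 \<and>
         (\<forall>i<k. snd (snd (block_iter m n s t v c i)) \<noteq> m - 2) \<longrightarrow>
       (let c' = push n s t (fst (block_iter m n s t v c k)) (m - 2) in
        \<forall>j. int j \<le> int m - int s * (\<lceil>real (t + 2) / real s\<rceil> - 1) - 1 \<longrightarrow>
          int (card {k. j < k \<and> int k \<le> int s * \<lfloor>real j / real s\<rfloor> + int t - 1 \<and> c' k < c' j})
            = v j))"
proof -
  interpret blk s t m n v using assms by unfold_locales auto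
  define B where "B k = block_iter m n s t v c k" for k
  have BS: "B (Suc k) = block_step m n s t v (B k)" for k unfolding B_def block_iter_def by simp
  have B0: "B 0 = block_init n s t c" unfolding B_def block_iter_def by simp
  have invk: "Inv (B k) \<and> mu (B k) + k \<le> mu (B 0)" if "\<forall>i<k. snd (snd (B i)) \<noteq> m - 2" for k
    using that
  proof (induction k)
    case 0 then show ?case using B0 init_inv by simp
  next
    case (Suc k)
    then have IH: "Inv (B k)" "mu (B k) + k \<le> mu (B 0)" by auto
    have "snd (snd (B k)) \<noteq> m - 2" using Suc.prems by auto
    from step_inv[OF IH(1) this] show ?case using IH(2) BS by simp
  qed
  have ex: "\<exists>k. snd (snd (B k)) = m - 2"
  proof (rule ccontr)
    assume "\<not> ?thesis"
    then have "\<forall>i<Suc (mu (B 0)). snd (snd (B i)) \<noteq> m - 2" by blast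
    then have "mu (B (Suc (mu (B 0)))) + Suc (mu (B 0)) \<le> mu (B 0)" using invk by blast
    then show False by simp
  qed
  have part2: "let c' = push n s t (fst (B k)) (m - 2) in
        \<forall>j. int j \<le> int m - int s * (\<lceil>real (t + 2) / real s\<rceil> - 1) - 1 \<longrightarrow>
          int (card {k. j < k \<and> int k \<le> int s * \<lfloor>real j / real s\<rfloor> + int t - 1 \<and> c' k < c' j})
            = v j"
    if hk: "snd (snd (B k)) = m - 2" "\<forall>i<k. snd (snd (B i)) \<noteq> m - 2" for k
  proof -
    obtain c0 a0 p0 where Bk: "B k = (c0, a0, p0)" by (cases "B k") auto
    have p0: "p0 = m - 2" using hk Bk by simp
    have I: "Inv (c0, a0, m - 2)" using invk[OF hk(2)] Bk p0 by simp
    have allp: "\<forall>i\<le>m-3. a0 i = 1" by (rule all_pushed[OF I])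
    have I6: "\<forall>i. a0 i = 1 \<longrightarrow> int (card {k\<in>{i+1..rp i}. a0 k = 1 \<and> c0 k < c0 i}) = v i"
      using I unfolding Inv_def by auto
    show ?thesis unfolding Let_def Bk fst_conv
    proof (intro allI impI)
      fix j assume hj: "int j \<le> int m - int s * (\<lceil>real (t + 2) / real s\<rceil> - 1) - 1"
      have Rj: "R j \<le> m - 3" by (rule jbound[OF hj])
      have j3: "j \<le> m - 3" using Rj R_ge[of j] by linarith
      have rpj: "rp j = R j" using ridx_eq[OF j3] Rj unfolding rp_def rprime_def by simp
      have fl: "\<lfloor>real j / real s\<rfloor> = int (j div s)" by (simp add: floor_divide_of_nat_eq)
      have RR: "int (R j) = int s * int (j div s) + int t - 1" unfolding R_def using t0 by simp
      let ?c' = "push n s t c0 (m - 2)"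
      have "{k. j < k \<and> int k \<le> int s * \<lfloor>real j / real s\<rfloor> + int t - 1 \<and> ?c' k < ?c' j}
            = {k\<in>{j+1..rp j}. a0 k = 1 \<and> c0 k < c0 j}"
      proof (intro set_eqI iffI)
        fix k assume "k \<in> {k. j < k \<and> int k \<le> int s * \<lfloor>real j / real s\<rfloor> + int t - 1 \<and> ?c' k < ?c' j}"
        then have k: "j < k" "k \<le> R j" "?c' k < ?c' j" using fl RR by auto
        have "k \<noteq> m - 2" "j \<noteq> m - 2" using k Rj j3 n_big by linarith+
        then show "k \<in> {k\<in>{j+1..rp j}. a0 k = 1 \<and> c0 k < c0 j}"
          using k rpj allp Rj by (auto simp: push_other)
      next
        fix k assume "k \<in> {k\<in>{j+1..rp j}. a0 k = 1 \<and> c0 k < c0 j}"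
        then have k: "j < k" "k \<le> R j" "c0 k < c0 j" using rpj by auto
        have "k \<noteq> m - 2" "j \<noteq> m - 2" using k Rj j3 n_big by linarith+
        then show "k \<in> {k. j < k \<and> int k \<le> int s * \<lfloor>real j / real s\<rfloor> + int t - 1 \<and> ?c' k < ?c' j}"
          using k fl RR by (auto simp: push_other)
      qed
      then show "int (card {k. j < k \<and> int k \<le> int s * \<lfloor>real j / real s\<rfloor> + int t - 1 \<and> ?c' k < ?c' j}) = v j"
        using I6 allp j3 by simp
    qed
  qed
  show ?thesis using ex part2 unfolding B_def by blast
qed

end
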